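(* Let $H$ be a finite set of non-vertical hyperplanes in $\mathbb{R}^d$ in generic coordinate position, and let $C$ be a $d$-dimensional cell of $\mathcal{A}(H)$. Let $\sigma$ be a first-stage prism of $C$ whose ceiling lies on the hyperplane $h^+$ and whose floor lies on $h^-$. Then for each hyperplane $h\in H\setminus\{h^+,h^-\}$, at most one of the flats $h^+\cap h$ and $h^-\cap h$ supports a $(d-2)$-face of $\partial\sigma$ (other than faces created by the vertical walls). It is $h^+\cap h$ if $C$ lies below $h$, and $h^-\cap h$ if $C$ lies above $h$. Consequently, if $n$ denotes the number of hyperplanes of $H$ supporting facets of $C$, the vertical projection of $\sigma$ onto $x_d=0$ is a convex polyhedron with at most $n-1$ facets.
   Context: For a convex cell $C$, let $f^+$ be a facet on its upper boundary (with respect to $x_d$) lying on the hyperplane $h^+$, and $f^-$ a facet on its lower boundary lying on $h^-$. If the intersection $P$ of the vertical projections of $f^+$ and $f^-$ onto $x_d=0$ is $(d-1)$-dimensional, the set $\sigma=\{p\in C:\text{the projection of } p \text{ lies in } P\}$ is a first-stage prism, with ceiling on $h^+$ and floor on $h^-$. *)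

theory Defs
  imports "HOL-Analysis.Analysis"
begin

text \<open>Points of R^d are pairs (y, t) with y in R^(d-1) (an arbitrary Euclidean space 'a)
  and t = x_d the vertical coordinate. A non-vertical hyperplane is given by (a, b),
  namely the graph x_d = a . y + b.\<close>

definition hyp :: "'a::euclidean_space \<times> real \<Rightarrow> ('a \<times> real) set" where
  "hyp h = {(y, t). t = fst h \<bullet> y + snd h}"

definition above :: "'a::euclidean_space \<times> real \<Rightarrow> ('a \<times> real) set" where
  "above h = {(y, t). t > fst h \<bullet> y + snd h}"

definition below :: "'a::euclidean_space \<times> real \<Rightarrow> ('a \<times> real) set" where
  "below h = {(y, t). t < fst h \<bullet> y + snd h}"

definition vproj :: "'a \<times> real \<Rightarrow> 'a" where
  "vproj p = fst p"

definition generic_position :: "('a::euclidean_space \<times> real) set \<Rightarrow> bool" where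
  "generic_position H \<longleftrightarrow>
     (\<forall>S \<subseteq> H. S \<noteq> {} \<longrightarrow>
        (card S \<le> DIM('a \<times> real) \<longrightarrow>
            aff_dim (\<Inter> (hyp ` S)) = int DIM('a \<times> real) - int (card S)) \<and>
        (card S > DIM('a \<times> real) \<longrightarrow> \<Inter> (hyp ` S) = {}))"

definition dcell :: "('a::euclidean_space \<times> real) set \<Rightarrow> ('a \<times> real) set \<Rightarrow> bool" where
  "dcell H C \<longleftrightarrow> C \<in> components (- \<Union> (hyp ` H))"

definition first_stage_prism ::
  "('a::euclidean_space \<times> real) set \<Rightarrow> ('a \<times> real) set \<Rightarrow> 'a \<times> real \<Rightarrow> 'a \<times> real
   \<Rightarrow> ('a \<times> real) set \<Rightarrow> ('a \<times> real) set \<Rightarrow> ('a \<times> real) set \<Rightarrow> bool" where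
  "first_stage_prism H C hp hm fp fm \<sigma> \<longleftrightarrow>
     hp \<in> H \<and> hm \<in> H \<and>
     fp facet_of closure C \<and> fp \<subseteq> hyp hp \<and> C \<subseteq> below hp \<and>
     fm facet_of closure C \<and> fm \<subseteq> hyp hm \<and> C \<subseteq> above hm \<and>
     aff_dim (vproj ` fp \<inter> vproj ` fm) = int DIM('a) \<and>
     \<sigma> = {p \<in> closure C. vproj p \<in> vproj ` fp \<inter> vproj ` fm}"

definition supports_ridge :: "('a::euclidean_space \<times> real) set \<Rightarrow> ('a \<times> real) set \<Rightarrow> bool" where
  "supports_ridge \<sigma> L \<longleftrightarrow>
     (\<exists>F. F face_of \<sigma> \<and> aff_dim F = int DIM('a \<times> real) - 2 \<and> F \<subseteq> L)"

definition num_facet_hyps :: "('a::euclidean_space \<times> real) set \<Rightarrow> ('a \<times> real) set \<Rightarrow> nat" where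
  "num_facet_hyps H C = card {h \<in> H. \<exists>F. F facet_of closure C \<and> F \<subseteq> hyp h}"

end

theory Submission
  imports Defs
begin

lemma dimge: "DIM('a::euclidean_space \<times> real) \<ge> 2"
  using DIM_positive[where 'a='a] by simp

lemma hyp_eq: "hyp h = {x. inner (- fst h, 1::real) x = snd h}"
  by (auto simp: hyp_def)
lemma below_eq: "below h = {x. inner (- fst h, 1::real) x < snd h}"
  by (auto simp: below_def)
lemma above_eq: "above h = {x. inner (- fst h, 1::real) x > snd h}"
  by (auto simp: above_def)

lemma gp_two:
  fixes H :: "('a::euclidean_space \<times> real) set"
  assumes "generic_position H" "h1 \<in> H" "h2 \<in> H" "h1 \<noteq> h2"
  shows "aff_dim (hyp h1 \<inter> hyp h2) = int DIM('a \<times> real) - 2"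
proof -
  have c: "card {h1,h2} = 2" using assms by auto
  have "{h1,h2} \<subseteq> H" using assms by auto
  then show ?thesis using assms(1) c dimge[where 'a='a] unfolding generic_position_def
    by (metis (no_types, lifting) Inter_insert cInf_singleton image_empty image_insert insert_not_empty of_nat_numeral)
qed

lemma gp_three:
  fixes H :: "('a::euclidean_space \<times> real) set"
  assumes "generic_position H" "h1 \<in> H" "h2 \<in> H" "h3 \<in> H" "h1 \<noteq> h2" "h1 \<noteq> h3" "h2 \<noteq> h3"
    and "X \<subseteq> hyp h1 \<inter> hyp h2 \<inter> hyp h3"
  shows "aff_dim X \<le> int DIM('a \<times> real) - 3"
proof -
  have c: "card {h1,h2,h3} = 3" using assms by auto
  have s: "{h1,h2,h3} \<subseteq> H" using assms by auto
  have I: "\<Inter> (hyp ` {h1,h2,h3}) = hyp h1 \<inter> hyp h2 \<inter> hyp h3" by auto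
  show ?thesis
  proof (cases "3 \<le> DIM('a \<times> real)")
    case True
    then have "aff_dim (hyp h1 \<inter> hyp h2 \<inter> hyp h3) = int DIM('a \<times> real) - 3"
      using assms(1) s c I unfolding generic_position_def
      by (metis insert_not_empty of_nat_numeral)
    then show ?thesis using aff_dim_subset[OF assms(8)] by simp
  next
    case False
    then have "hyp h1 \<inter> hyp h2 \<inter> hyp h3 = {}"
      using assms(1) s c I unfolding generic_position_def
      by (metis insert_not_empty not_le)
    then have "X = {}" using assms(8) by auto
    then show ?thesis using False by simp
  qed
qed

lemma gp_nonpar:
  fixes H :: "('a::euclidean_space \<times> real) set"
  assumes "generic_position H" "h1 \<in> H" "h2 \<in> H" "h1 \<noteq> h2"
  shows "fst h1 \<noteq> fst h2"
proof
  assume e: "fst h1 = fst h2"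
  have "aff_dim (hyp h1 \<inter> hyp h2) = int DIM('a \<times> real) - 2" using gp_two[OF assms] .
  then have ne: "hyp h1 \<inter> hyp h2 \<noteq> {}" using dimge[where 'a='a] by auto
  then obtain y t where "(y,t) \<in> hyp h1" "(y,t) \<in> hyp h2" by auto
  then have "snd h1 = snd h2" using e by (auto simp: hyp_def)
  then show False using e assms(4) by (simp add: prod_eq_iff)
qed


lemma tight:
  fixes a :: "'i \<Rightarrow> 'b::euclidean_space"
  assumes fin: "finite I" and S: "S = {x. \<forall>i\<in>I. a i \<bullet> x \<le> b i}"
    and G: "G face_of S" "G \<noteq> {}" "G \<noteq> S"
  shows "\<exists>i\<in>I. a i \<noteq> 0 \<and> G \<subseteq> {x. a i \<bullet> x = b i}"
proof -
  have cS: "convex S" unfolding S by (auto simp: convex_def inner_add_right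
        intro!: convex_bound_le)
  have "convex G" using G(1) face_of_imp_convex by blast
  then have "rel_interior G \<noteq> {}" using G(2) rel_interior_eq_empty by blast
  then obtain y where y: "y \<in> rel_interior G" by blast
  have yG: "y \<in> G" using y rel_interior_subset by blast
  have yS: "y \<in> S" using yG face_of_imp_subset[OF G(1)] by blast
  have "\<exists>i\<in>I. a i \<noteq> 0 \<and> a i \<bullet> y = b i"
  proof (rule ccontr)
    assume "\<not> ?thesis"
    then have strict: "\<forall>i\<in>I. a i \<noteq> 0 \<longrightarrow> a i \<bullet> y < b i" using yS S by force
    define Uo where "Uo = (\<Inter>i\<in>I. {x. a i \<noteq> 0 \<longrightarrow> a i \<bullet> x < b i})"
    have "open Uo" unfolding Uo_def
    proof (rule open_INT[OF fin], rule ballI)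
      fix i assume "i \<in> I"
      show "open {x. a i \<noteq> 0 \<longrightarrow> a i \<bullet> x < b i}"
        by (cases "a i = 0") (auto intro: open_halfspace_lt)
    qed
    moreover have "y \<in> Uo" using strict by (auto simp: Uo_def)
    moreover have "Uo \<subseteq> S"
    proof
      fix x assume "x \<in> Uo"
      then show "x \<in> S" using yS unfolding Uo_def S by (force simp: less_imp_le)
    qed
    ultimately have "y \<in> interior S" by (meson interiorI)
    then show False using face_of_disjoint_interior[OF G(1) G(3)] yG by blast
  qed
  then obtain i where i: "i \<in> I" "a i \<noteq> 0" "a i \<bullet> y = b i" by blast
  have "(S \<inter> {x. a i \<bullet> x = b i}) face_of S"
    by (rule face_of_Int_supporting_hyperplane_le[OF cS]) (use i S in auto)
  moreover have "G \<subseteq> S" using face_of_imp_subset[OF G(1)] .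
  moreover have "(S \<inter> {x. a i \<bullet> x = b i}) \<inter> rel_interior G \<noteq> {}" using y yS i by blast
  ultimately have "G \<subseteq> S \<inter> {x. a i \<bullet> x = b i}" by (rule subset_of_face_of)
  then show ?thesis using i by blast
qed


lemma facet_sub_facet:
  fixes S :: "'b::euclidean_space set"
  assumes "convex S" "F facet_of S" "F0 facet_of S" "F \<subseteq> F0"
  shows "F = F0"
proof (rule ccontr)
  assume ne: "F \<noteq> F0"
  have "F face_of F0"
    using assms face_of_subset face_of_imp_subset unfolding facet_of_def by blast
  moreover have "convex F0" using assms(3) face_of_imp_convex unfolding facet_of_def by blast
  ultimately have "aff_dim F < aff_dim F0" using face_of_aff_dim_lt ne by blast
  then show False using assms(2,3) unfolding facet_of_def by simp
qed

lemma facet_unique_hyperplane: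
  fixes P :: "'b::euclidean_space set"
  assumes "convex P" "aff_dim P = int DIM('b)" "c \<noteq> 0" "\<And>y. y \<in> P \<Longrightarrow> c \<bullet> y \<le> e"
    "G facet_of P" "G \<subseteq> {y. c \<bullet> y = e}"
  shows "G = P \<inter> {y. c \<bullet> y = e}"
proof (rule ccontr)
  assume ne: "G \<noteq> P \<inter> {y. c \<bullet> y = e}"
  let ?R = "P \<inter> {y. c \<bullet> y = e}"
  have R: "?R face_of P" using face_of_Int_supporting_hyperplane_le assms(1,4) by blast
  have GR: "G \<subseteq> ?R" using assms(5,6) face_of_imp_subset unfolding facet_of_def by blast
  have "?R \<noteq> P"
  proof
    assume "?R = P"
    then have "P \<subseteq> {y. c \<bullet> y = e}" by blast
    then have "aff_dim P \<le> aff_dim {y. c \<bullet> y = e}" by (rule aff_dim_subset)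
    also have "\<dots> = int DIM('b) - 1" using assms(3) by (simp add: aff_dim_hyperplane)
    finally show False using assms(2) by simp
  qed
  then have l1: "aff_dim ?R < aff_dim P" using face_of_aff_dim_lt assms(1) R by blast
  have "G face_of ?R" using face_of_subset assms(5) GR unfolding facet_of_def by blast
  moreover have "convex ?R" using R face_of_imp_convex by blast
  ultimately have "aff_dim G < aff_dim ?R" using face_of_aff_dim_lt ne by blast
  then show False using l1 assms(5) unfolding facet_of_def by simp
qed

lemma ca_eq:
  fixes a a' y :: "'b::real_inner"
  assumes "s \<noteq> 0"
  shows "(inner (s *\<^sub>R (a - a')) y = s * (b' - b)) \<longleftrightarrow> (inner a y + b = inner a' y + b')"
proof -
  have "inner (s *\<^sub>R (a - a')) y = s * (inner a y - inner a' y)" by (simp add: inner_diff_left)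
  then show ?thesis using assms by auto
qed

lemma lift_aff:
  fixes G :: "'b::euclidean_space set"
  shows "aff_dim G \<le> aff_dim ((\<lambda>y. (y, f y :: real)) ` G)"
proof -
  have "fst ` ((\<lambda>y. (y, f y)) ` G) = G" by (simp add: image_image)
  then show ?thesis using aff_dim_linear_image_le[OF linear_fst, of "(\<lambda>y. (y, f y)) ` G"] by simp
qed


theorem mainTheorem12:
  fixes H :: "('a::euclidean_space \<times> real) set"
    and C \<sigma> fp fm :: "('a \<times> real) set"
    and hp hm :: "'a \<times> real"
  assumes "finite H"
    and "generic_position H"
    and "dcell H C"
    and "first_stage_prism H C hp hm fp fm \<sigma>"
  shows "(\<forall>h \<in> H - {hp, hm}.
            \<not> (supports_ridge \<sigma> (hyp hp \<inter> hyp h) \<and> supports_ridge \<sigma> (hyp hm \<inter> hyp h)) \<and>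
            (C \<subseteq> below h \<longrightarrow> \<not> supports_ridge \<sigma> (hyp hm \<inter> hyp h)) \<and>
            (C \<subseteq> above h \<longrightarrow> \<not> supports_ridge \<sigma> (hyp hp \<inter> hyp h)))
         \<and> polyhedron (vproj ` \<sigma>) \<and> convex (vproj ` \<sigma>)
         \<and> finite {G. G facet_of vproj ` \<sigma>}
         \<and> card {G. G facet_of vproj ` \<sigma>} \<le> num_facet_hyps H C - 1"
proof -
  let ?d = "DIM('a \<times> real)"
  note fin = assms(1) and gp = assms(2)
  have hpH: "hp \<in> H" and hmH: "hm \<in> H" and fpF: "fp facet_of closure C"
    and fphyp: "fp \<subseteq> hyp hp" and Cbp: "C \<subseteq> below hp"
    and fmF: "fm facet_of closure C" and fmhyp: "fm \<subseteq> hyp hm" and Cam: "C \<subseteq> above hm"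
    and dimP: "aff_dim (vproj ` fp \<inter> vproj ` fm) = int DIM('a)"
    and sig: "\<sigma> = {p \<in> closure C. vproj p \<in> vproj ` fp \<inter> vproj ` fm}"
    using assms(4) unfolding first_stage_prism_def by auto
  have Ccomp: "C \<in> components (- \<Union> (hyp ` H))" using assms(3) unfolding dcell_def .
  have Cne: "C \<noteq> {}" using Ccomp in_components_nonempty by blast
  have Cconn: "connected C" using Ccomp in_components_connected by blast
  have Csub: "C \<subseteq> - \<Union> (hyp ` H)" using Ccomp in_components_subset by blast
  have "closed (\<Union> (hyp ` H))"
    using fin by (intro closed_Union) (auto simp: hyp_eq closed_hyperplane)
  then have Copen: "open C" using Ccomp open_components by blast
  have side: "C \<subseteq> below h \<or> C \<subseteq> above h" if h: "h \<in> H" for h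
  proof (rule ccontr)
    assume "\<not> ?thesis"
    then obtain x y where xy: "x \<in> C" "x \<notin> below h" "y \<in> C" "y \<notin> above h" by blast
    then have "inner (- fst h, 1::real) y \<le> snd h" "snd h \<le> inner (- fst h, 1::real) x"
      by (auto simp: below_eq above_eq)
    then obtain z where "z \<in> C" "inner (- fst h, 1::real) z = snd h"
      using connected_ivt_hyperplane[OF Cconn xy(3) xy(1)] by blast
    then show False using Csub h by (auto simp: hyp_eq)
  qed
  define s where "s h = (if C \<subseteq> below h then 1 else -1::real)" for h
  define nrm where "nrm h = s h *\<^sub>R (- fst h, 1::real)" for h
  define off where "off h = s h * snd h" for h
  have s_nz: "s h \<noteq> 0" for h by (simp add: s_def)
  have nrm_nz: "nrm h \<noteq> 0" for h by (simp add: nrm_def s_def prod_eq_iff)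
  have hyp_nrm: "hyp h = {x. inner (nrm h) x = off h}" for h
    by (auto simp: hyp_eq nrm_def off_def s_def)
  have sideeq: "{x. inner (nrm h) x < off h} = (if C \<subseteq> below h then below h else above h)" for h
    by (auto simp: below_eq above_eq nrm_def off_def s_def)
  have Cin: "C \<subseteq> {x. inner (nrm h) x < off h}" if "h \<in> H" for h
    using side[OF that] sideeq[of h] by auto
  define D where "D = \<Inter> ((\<lambda>h. {x. inner (nrm h) x < off h}) ` H)"
  have CD: "C = D"
  proof
    show "C \<subseteq> D" using Cin unfolding D_def by blast
    have "convex D" unfolding D_def by (intro convex_INT) (auto intro: convex_halfspace_lt)
    then have "connected D" by (rule convex_connected)
    moreover have "D \<subseteq> - \<Union> (hyp ` H)" unfolding D_def hyp_nrm by force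
    moreover have "C \<inter> D \<noteq> {}" using \<open>C \<subseteq> D\<close> Cne by blast
    ultimately show "D \<subseteq> C" using components_maximal[OF Ccomp] by blast
  qed
  have clC: "closure C = {x. \<forall>h\<in>H. inner (nrm h) x \<le> off h}"
  proof -
    let ?F = "(\<lambda>h. {x. inner (nrm h) x < off h}) ` H"
    have "\<Inter> (rel_interior ` ?F) = \<Inter> ?F"
      by (simp add: rel_interior_open open_halfspace_lt image_image)
    then have "\<Inter> (rel_interior ` ?F) \<noteq> {}" using CD Cne D_def by simp
    then have "closure (\<Inter> ?F) = \<Inter> (closure ` ?F)"
      by (intro closure_Inter_convex) (auto intro: convex_halfspace_lt)
    also have "\<dots> = {x. \<forall>h\<in>H. inner (nrm h) x \<le> off h}"
      using nrm_nz by (auto simp: image_image)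
    finally show ?thesis using CD D_def by simp
  qed
  have cvxC: "convex (closure C)" unfolding clC
    by (auto simp: convex_def inner_add_right intro!: convex_bound_le)
  have polyC: "polyhedron (closure C)"
  proof -
    have "closure C = \<Inter> ((\<lambda>h. {x. inner (nrm h) x \<le> off h}) ` H)" using clC by auto
    then show ?thesis using fin by (auto intro!: polyhedron_Inter polyhedron_halfspace_le)
  qed
  have affC: "aff_dim (closure C) = int ?d" using aff_dim_open[OF Copen Cne] by simp
  have CclC: "C \<subseteq> closure C" by (rule closure_subset)
  have hyp_le: "inner (nrm h) x \<le> off h" if "h \<in> H" "x \<in> closure C" for h x
    using that clC by auto
  have C_nohyp: "C \<inter> hyp h = {}" if "h \<in> H" for h using Csub that by blast
  have facet_hyp: "\<exists>h\<in>H. F \<subseteq> hyp h" if F: "F facet_of closure C" for F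
  proof -
    have "F \<noteq> closure C" using F by auto
    moreover have "F \<noteq> {}" "F face_of closure C" using F unfolding facet_of_def by auto
    ultimately obtain h where "h \<in> H" "nrm h \<noteq> 0" "F \<subseteq> {x. inner (nrm h) x = off h}"
      using tight[OF fin clC] by blast
    then show ?thesis using hyp_nrm by auto
  qed
  have below_not_above: "\<not> C \<subseteq> above h" if "C \<subseteq> below h" for h
  proof
    assume a: "C \<subseteq> above h"
    obtain c where "c \<in> C" using Cne by blast
    then show False using a that by (cases c) (force simp: below_def above_def)
  qed
  have hpm: "hp \<noteq> hm" using below_not_above[OF Cbp] Cam by blast
  have s_hp: "s hp = 1" using Cbp by (simp add: s_def)
  have s_hm: "s hm = -1" using Cam below_not_above[of hm] by (auto simp: s_def)
  have le_below: "snd x \<le> inner (fst h) (fst x) + snd h" if "h \<in> H" "C \<subseteq> below h" "x \<in> closure C" for h x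
    using hyp_le[OF that(1,3)] that(2) by (cases x) (auto simp: nrm_def off_def s_def)
  have le_above: "snd x \<ge> inner (fst h) (fst x) + snd h" if "h \<in> H" "\<not> C \<subseteq> below h" "x \<in> closure C" for h x
    using hyp_le[OF that(1,3)] that(2) by (cases x) (auto simp: nrm_def off_def s_def)
  have facet_eq: "F = closure C \<inter> hyp h" if F: "F facet_of closure C" "F \<subseteq> hyp h" and h: "h \<in> H" for F h
  proof (rule ccontr)
    assume ne: "F \<noteq> closure C \<inter> hyp h"
    let ?R = "closure C \<inter> hyp h"
    have R: "?R face_of closure C" unfolding hyp_nrm
      by (rule face_of_Int_supporting_hyperplane_le[OF cvxC]) (use hyp_le h in auto)
    have FR: "F \<subseteq> ?R" using F face_of_imp_subset unfolding facet_of_def by blast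
    obtain c where "c \<in> C" using Cne by blast
    then have "?R \<noteq> closure C" using C_nohyp[OF h] CclC by blast
    then have l1: "aff_dim ?R < aff_dim (closure C)" using face_of_aff_dim_lt cvxC R by blast
    have "F face_of ?R" using face_of_subset F FR R face_of_imp_subset unfolding facet_of_def by blast
    moreover have "convex ?R" using R face_of_imp_convex by blast
    ultimately have "aff_dim F < aff_dim ?R" using face_of_aff_dim_lt ne by blast
    then show False using l1 F unfolding facet_of_def by simp
  qed
  have fp_eq: "fp = closure C \<inter> hyp hp" using facet_eq fpF fphyp hpH by blast
  have fm_eq: "fm = closure C \<inter> hyp hm" using facet_eq fmF fmhyp hmH by blast
  define lift where "lift g y = (y, inner (fst g) y + snd g)" for g :: "'a \<times> real" and y
  have lift_hyp: "lift g y \<in> hyp g" for g y by (simp add: lift_def hyp_def)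
  have hyp_lift: "p = lift g (fst p)" if "p \<in> hyp g" for p g
    using that by (cases p) (simp add: lift_def hyp_def)
  have proj_fp: "y \<in> vproj ` fp \<longleftrightarrow> lift hp y \<in> closure C" for y
  proof
    assume "y \<in> vproj ` fp"
    then obtain p where "p \<in> fp" "y = fst p" by (auto simp: vproj_def)
    then show "lift hp y \<in> closure C" using fp_eq hyp_lift by auto
  next
    assume "lift hp y \<in> closure C"
    then have "lift hp y \<in> fp" using fp_eq lift_hyp by auto
    then show "y \<in> vproj ` fp" by (force simp: vproj_def lift_def)
  qed
  have proj_fm: "y \<in> vproj ` fm \<longleftrightarrow> lift hm y \<in> closure C" for y
  proof
    assume "y \<in> vproj ` fm"
    then obtain p where "p \<in> fm" "y = fst p" by (auto simp: vproj_def)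
    then show "lift hm y \<in> closure C" using fm_eq hyp_lift by auto
  next
    assume "lift hm y \<in> closure C"
    then have "lift hm y \<in> fm" using fm_eq lift_hyp by auto
    then show "y \<in> vproj ` fm" by (force simp: vproj_def lift_def)
  qed
  define P where "P = vproj ` fp \<inter> vproj ` fm"
  define ca where "ca g h = s h *\<^sub>R (fst g - fst h)" for g h :: "'a \<times> real"
  define cb where "cb g h = s h * (snd h - snd g)" for g h :: "'a \<times> real"
  have lift_in: "lift g y \<in> closure C \<longleftrightarrow> (\<forall>h\<in>H. inner (ca g h) y \<le> cb g h)" for g y
  proof -
    have "inner (nrm h) (lift g y) \<le> off h \<longleftrightarrow> inner (ca g h) y \<le> cb g h" for h
    proof -
      have e1: "inner (nrm h) (lift g y) = s h * (inner (fst g) y + snd g - inner (fst h) y)"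
        by (simp add: nrm_def lift_def algebra_simps)
      have e2: "inner (ca g h) y = s h * (inner (fst g) y - inner (fst h) y)"
        by (simp add: ca_def inner_diff_left)
      show ?thesis unfolding e1 e2 off_def cb_def
        by (cases "C \<subseteq> below h") (simp_all add: s_def; linarith)+
    qed
    then show ?thesis using clC by auto
  qed
  define I where "I = {hp, hm} \<times> H"
  have finI: "finite I" using fin by (simp add: I_def)
  have P_eq: "P = {y. \<forall>i\<in>I. inner (ca (fst i) (snd i)) y \<le> cb (fst i) (snd i)}"
    unfolding P_def I_def using proj_fp proj_fm lift_in by auto
  have vs: "vproj ` \<sigma> = P"
  proof
    show "vproj ` \<sigma> \<subseteq> P" using sig P_def by auto
    show "P \<subseteq> vproj ` \<sigma>"
    proof
      fix y assume y: "y \<in> P"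
      then have "lift hp y \<in> closure C" using proj_fp P_def by auto
      moreover have "vproj (lift hp y) = y" by (simp add: vproj_def lift_def)
      ultimately show "y \<in> vproj ` \<sigma>" using y sig P_def by (metis (mono_tags, lifting) image_eqI mem_Collect_eq)
    qed
  qed
  have polyP: "polyhedron P"
  proof -
    have "P = \<Inter> ((\<lambda>i. {y. inner (ca (fst i) (snd i)) y \<le> cb (fst i) (snd i)}) ` I)" using P_eq by auto
    then show ?thesis using finI by (auto intro!: polyhedron_Inter polyhedron_halfspace_le)
  qed
  have cvxP: "convex P" using polyP polyhedron_imp_convex by blast
  have affP: "aff_dim P = int DIM('a)" using dimP P_def by simp
  have hm_le_hp: "inner (fst hm) y + snd hm \<le> inner (fst hp) y + snd hp" if "y \<in> P" for y
    using le_below[OF hpH Cbp, of "lift hm y"] that proj_fm P_def by (auto simp: lift_def)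
  have dd: "int ?d = int DIM('a) + 1" by simp
  have noA: "\<not> supports_ridge \<sigma> (hyp hp \<inter> hyp h)"
    if h: "h \<in> H" "h \<noteq> hp" "h \<noteq> hm" "\<not> C \<subseteq> below h" for h
  proof
    assume "supports_ridge \<sigma> (hyp hp \<inter> hyp h)"
    then obtain F where F: "F face_of \<sigma>" "aff_dim F = int ?d - 2" "F \<subseteq> hyp hp \<inter> hyp h"
      by (auto simp: supports_ridge_def)
    have "\<not> F \<subseteq> hyp hm"
    proof
      assume "F \<subseteq> hyp hm"
      then have "aff_dim F \<le> int ?d - 3"
        using gp_three[OF gp hpH hmH h(1), of F] hpm h F(3) by auto
      then show False using F(2) by simp
    qed
    then obtain p where p: "p \<in> F" "p \<notin> hyp hm" by blast
    have ps: "p \<in> \<sigma>" using F(1) face_of_imp_subset p by blast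
    obtain y t where pyt: "p = (y,t)" by (cases p)
    have yP: "y \<in> P" using ps sig P_def pyt by (auto simp: vproj_def)
    then have "lift hm y \<in> closure C" using proj_fm P_def by auto
    then have "inner (fst h) y + snd h \<le> inner (fst hm) y + snd hm"
      using le_above[OF h(1) h(4), of "lift hm y"] by (simp add: lift_def)
    moreover have "t = inner (fst hp) y + snd hp" "t = inner (fst h) y + snd h"
      using p F(3) pyt by (auto simp: hyp_def)
    moreover have "inner (fst hm) y + snd hm \<le> inner (fst hp) y + snd hp" using hm_le_hp[OF yP] .
    ultimately have "t = inner (fst hm) y + snd hm" by linarith
    then show False using p(2) pyt by (auto simp: hyp_def)
  qed
  have noB: "\<not> supports_ridge \<sigma> (hyp hm \<inter> hyp h)"
    if h: "h \<in> H" "h \<noteq> hp" "h \<noteq> hm" "C \<subseteq> below h" for h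
  proof
    assume "supports_ridge \<sigma> (hyp hm \<inter> hyp h)"
    then obtain F where F: "F face_of \<sigma>" "aff_dim F = int ?d - 2" "F \<subseteq> hyp hm \<inter> hyp h"
      by (auto simp: supports_ridge_def)
    have "\<not> F \<subseteq> hyp hp"
    proof
      assume "F \<subseteq> hyp hp"
      then have "aff_dim F \<le> int ?d - 3"
        using gp_three[OF gp hpH hmH h(1), of F] hpm h F(3) by auto
      then show False using F(2) by simp
    qed
    then obtain p where p: "p \<in> F" "p \<notin> hyp hp" by blast
    have ps: "p \<in> \<sigma>" using F(1) face_of_imp_subset p by blast
    obtain y t where pyt: "p = (y,t)" by (cases p)
    have yP: "y \<in> P" using ps sig P_def pyt by (auto simp: vproj_def)
    then have "lift hp y \<in> closure C" using proj_fp P_def by auto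
    then have "inner (fst hp) y + snd hp \<le> inner (fst h) y + snd h"
      using le_below[OF h(1) h(4), of "lift hp y"] by (simp add: lift_def)
    moreover have "t = inner (fst hm) y + snd hm" "t = inner (fst h) y + snd h"
      using p F(3) pyt by (auto simp: hyp_def)
    moreover have "inner (fst hm) y + snd hm \<le> inner (fst hp) y + snd hp" using hm_le_hp[OF yP] .
    ultimately have "t = inner (fst hp) y + snd hp" by linarith
    then show False using p(2) pyt by (auto simp: hyp_def)
  qed
  have part1: "\<forall>h \<in> H - {hp, hm}.
            \<not> (supports_ridge \<sigma> (hyp hp \<inter> hyp h) \<and> supports_ridge \<sigma> (hyp hm \<inter> hyp h)) \<and>
            (C \<subseteq> below h \<longrightarrow> \<not> supports_ridge \<sigma> (hyp hm \<inter> hyp h)) \<and>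
            (C \<subseteq> above h \<longrightarrow> \<not> supports_ridge \<sigma> (hyp hp \<inter> hyp h))"
  proof
    fix h assume h: "h \<in> H - {hp, hm}"
    show "\<not> (supports_ridge \<sigma> (hyp hp \<inter> hyp h) \<and> supports_ridge \<sigma> (hyp hm \<inter> hyp h)) \<and>
            (C \<subseteq> below h \<longrightarrow> \<not> supports_ridge \<sigma> (hyp hm \<inter> hyp h)) \<and>
            (C \<subseteq> above h \<longrightarrow> \<not> supports_ridge \<sigma> (hyp hp \<inter> hyp h))"
      using h noA[of h] noB[of h] below_not_above[of h] by blast
  qed
  define NH where "NH = {h \<in> H. \<exists>F. F facet_of closure C \<and> F \<subseteq> hyp h}"
  have NHfin: "finite NH" using fin NH_def by simp
  have hpNH: "hp \<in> NH" using hpH fpF fphyp NH_def by blast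
  have hmNH: "hm \<in> NH" using hmH fmF fmhyp NH_def by blast
  define tg where "tg h = (if h = hm then hp else if C \<subseteq> below h then hp else hm)" for h
  define E where "E h = {y. inner (ca (tg h) h) y = cb (tg h) h}" for h
  have gv_eq: "inner (ca g h) y = cb g h \<longleftrightarrow> inner (fst g) y + snd g = inner (fst h) y + snd h" for g h y
    unfolding ca_def cb_def by (rule ca_eq[OF s_nz])
  have NH_from: "h \<in> NH" if hh: "h \<in> H" "g0 \<in> {hp,hm}" "h \<noteq> g0"
     "X \<subseteq> closure C \<inter> hyp h \<inter> hyp g0" "X \<noteq> {}" "aff_dim X \<ge> int ?d - 2" for h g0 X
  proof (rule ccontr)
    assume nNH: "h \<notin> NH"
    define f0 where "f0 = closure C \<inter> hyp g0"
    have f0F: "f0 facet_of closure C" using hh(2) fp_eq fm_eq fpF fmF f0_def by auto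
    have g0H: "g0 \<in> H" using hh(2) hpH hmH by auto
    let ?R = "closure C \<inter> hyp h"
    have R: "?R face_of closure C" unfolding hyp_nrm
      by (rule face_of_Int_supporting_hyperplane_le[OF cvxC]) (use hyp_le hh(1) in auto)
    have Rne: "?R \<noteq> {}" using hh(4,5) by blast
    obtain c where "c \<in> C" using Cne by blast
    then have "?R \<noteq> closure C" using C_nohyp[OF hh(1)] CclC by blast
    then have Req: "?R = \<Inter>{F. F facet_of closure C \<and> ?R \<subseteq> F}"
      using face_of_polyhedron[OF polyC R Rne] by blast
    have sub: "{F. F facet_of closure C \<and> ?R \<subseteq> F} \<subseteq> {f0}"
    proof
      fix F assume "F \<in> {F. F facet_of closure C \<and> ?R \<subseteq> F}"
      then have F: "F facet_of closure C" "?R \<subseteq> F" by auto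
      obtain h' where h': "h' \<in> H" "F \<subseteq> hyp h'" using facet_hyp[OF F(1)] by blast
      have "h' \<noteq> h" using nNH F h' NH_def hh(1) by auto
      have "h' = g0"
      proof (rule ccontr)
        assume "h' \<noteq> g0"
        have "X \<subseteq> hyp h \<inter> hyp g0 \<inter> hyp h'" using hh(4) F(2) h'(2) by blast
        then have "aff_dim X \<le> int ?d - 3"
          using gp_three[OF gp hh(1) g0H h'(1)] hh(3) \<open>h' \<noteq> h\<close> \<open>h' \<noteq> g0\<close> by auto
        then show False using hh(6) by simp
      qed
      then have "F \<subseteq> f0" using F h' f0_def face_of_imp_subset unfolding facet_of_def by blast
      then have "F = f0" using facet_sub_facet[OF cvxC F(1) f0F] by blast
      then show "F \<in> {f0}" by simp
    qed
    have "f0 \<subseteq> ?R"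
    proof -
      have "f0 \<subseteq> \<Inter>{F. F facet_of closure C \<and> ?R \<subseteq> F}" using sub by blast
      then show ?thesis using Req by simp
    qed
    then have "f0 \<subseteq> hyp h \<inter> hyp g0" using f0_def by blast
    then have "aff_dim f0 \<le> int ?d - 2"
      using gp_two[OF gp hh(1) g0H hh(3)] aff_dim_subset by metis
    moreover have "aff_dim f0 = int ?d - 1" using f0F affC unfolding facet_of_def by simp
    ultimately show False by simp
  qed
  have label: "\<exists>h. h \<in> NH - {hp} \<and> G \<subseteq> E h" if G: "G facet_of P" for G
  proof -
    have Gf: "G face_of P" "G \<noteq> {}" "G \<noteq> P" using G unfolding facet_of_def by auto
    have affG: "aff_dim G = int ?d - 2" using G affP unfolding facet_of_def by simp
    obtain i where i: "i \<in> I" "ca (fst i) (snd i) \<noteq> 0"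
        "G \<subseteq> {y. inner (ca (fst i) (snd i)) y = cb (fst i) (snd i)}"
      using tight[OF finI P_eq Gf] by blast
    obtain g h where gh: "i = (g,h)" "g \<in> {hp,hm}" "h \<in> H" using i(1) I_def by auto
    have Gtight: "G \<subseteq> {y. inner (ca g h) y = cb g h}" using i(3) gh by simp
    have eqG: "\<forall>y\<in>G. inner (fst g) y + snd g = inner (fst h) y + snd h" using Gtight gv_eq by auto
    have gneh: "g \<noteq> h" using i(2) gh by (auto simp: ca_def)
    have GP: "G \<subseteq> P" using Gf face_of_imp_subset by blast
    define Lp where "Lp = lift hp ` G"
    define Lm where "Lm = lift hm ` G"
    have Lp_aff: "aff_dim Lp \<ge> int ?d - 2" using lift_aff[of G] affG unfolding Lp_def lift_def by simp
    have Lm_aff: "aff_dim Lm \<ge> int ?d - 2" using lift_aff[of G] affG unfolding Lm_def lift_def by simp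
    have Lp_C: "Lp \<subseteq> closure C" unfolding Lp_def using GP proj_fp P_def by (smt (verit) IntE image_subset_iff subsetD)
    have Lm_C: "Lm \<subseteq> closure C" unfolding Lm_def using GP proj_fm P_def by (smt (verit) IntE image_subset_iff subsetD)
    have Lp_hyp: "Lp \<subseteq> hyp hp" unfolding Lp_def using lift_hyp by blast
    have Lm_hyp: "Lm \<subseteq> hyp hm" unfolding Lm_def using lift_hyp by blast
    have Lp_ne: "Lp \<noteq> {}" "Lm \<noteq> {}" using Gf(2) Lp_def Lm_def by auto
    have Ehm: "G \<subseteq> E hm" if "\<forall>y\<in>G. inner (fst hp) y + snd hp = inner (fst hm) y + snd hm"
      using that gv_eq by (auto simp: E_def tg_def)
    have three: "False" if "h \<noteq> hp" "h \<noteq> hm"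
       "\<forall>y\<in>G. inner (fst hp) y + snd hp = inner (fst h) y + snd h"
       "\<forall>y\<in>G. inner (fst hm) y + snd hm = inner (fst h) y + snd h"
    proof -
      have "Lp \<subseteq> hyp hp \<inter> hyp hm \<inter> hyp h" using that(3,4) unfolding Lp_def
        by (auto simp: lift_def hyp_def)
      then have "aff_dim Lp \<le> int ?d - 3" using gp_three[OF gp hpH hmH gh(3)] hpm that(1,2) by auto
      then show False using Lp_aff by simp
    qed
    show ?thesis
    proof (cases "g = hp")
      case True
      then have hnp: "h \<noteq> hp" using gneh by simp
      show ?thesis
      proof (cases "C \<subseteq> below h")
        case True
        then have hnm: "h \<noteq> hm" using Cam below_not_above by blast
        have "tg h = hp" using True hnm tg_def by simp
        then have "G \<subseteq> E h" using Gtight \<open>g = hp\<close> E_def by simp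
        moreover have "h \<in> NH"
        proof (rule NH_from[of h hp Lp])
          show "Lp \<subseteq> closure C \<inter> hyp h \<inter> hyp hp"
            using Lp_C Lp_hyp eqG \<open>g = hp\<close> unfolding Lp_def by (auto simp: lift_def hyp_def)
        qed (use gh hnp Lp_ne Lp_aff in auto)
        ultimately show ?thesis using hnp by blast
      next
        case False
        have eq3: "\<forall>y\<in>G. inner (fst hp) y + snd hp = inner (fst hm) y + snd hm
                      \<and> inner (fst hm) y + snd hm = inner (fst h) y + snd h"
        proof
          fix y assume y: "y \<in> G"
          then have "lift hm y \<in> closure C" using Lm_C Lm_def by auto
          then have "inner (fst h) y + snd h \<le> inner (fst hm) y + snd hm"
            using le_above[OF gh(3) False, of "lift hm y"] by (simp add: lift_def)
          moreover have "inner (fst hm) y + snd hm \<le> inner (fst hp) y + snd hp" using hm_le_hp y GP by auto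
          moreover have "inner (fst hp) y + snd hp = inner (fst h) y + snd h" using eqG y \<open>g = hp\<close> by auto
          ultimately show "inner (fst hp) y + snd hp = inner (fst hm) y + snd hm
                      \<and> inner (fst hm) y + snd hm = inner (fst h) y + snd h" by linarith
        qed
        show ?thesis
        proof (cases "h = hm")
          case True
          then show ?thesis using Ehm eq3 hmNH hpm by blast
        next
          case False
          then show ?thesis using three[OF hnp False] eq3 by auto
        qed
      qed
    next
      case False
      then have ghm: "g = hm" using gh by auto
      then have hnm: "h \<noteq> hm" using gneh by simp
      show ?thesis
      proof (cases "C \<subseteq> below h")
        case True
        have eq3: "\<forall>y\<in>G. inner (fst hp) y + snd hp = inner (fst hm) y + snd hm
                      \<and> inner (fst hp) y + snd hp = inner (fst h) y + snd h"
        proof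
          fix y assume y: "y \<in> G"
          then have "lift hp y \<in> closure C" using Lp_C Lp_def by auto
          then have "inner (fst hp) y + snd hp \<le> inner (fst h) y + snd h"
            using le_below[OF gh(3) True, of "lift hp y"] by (simp add: lift_def)
          moreover have "inner (fst hm) y + snd hm \<le> inner (fst hp) y + snd hp" using hm_le_hp y GP by auto
          moreover have "inner (fst hm) y + snd hm = inner (fst h) y + snd h" using eqG y ghm by auto
          ultimately show "inner (fst hp) y + snd hp = inner (fst hm) y + snd hm
                      \<and> inner (fst hp) y + snd hp = inner (fst h) y + snd h" by linarith
        qed
        show ?thesis
        proof (cases "h = hp")
          case True
          then show ?thesis using Ehm eq3 hmNH hpm by blast
        next
          case False
          have "\<forall>y\<in>G. inner (fst hm) y + snd hm = inner (fst h) y + snd h"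
               "\<forall>y\<in>G. inner (fst hp) y + snd hp = inner (fst h) y + snd h" using eq3 by auto
          then show ?thesis using three[OF False hnm] by blast
        qed
      next
        case False
        have hnp: "h \<noteq> hp" using False Cbp by blast
        have "tg h = hm" using False hnm tg_def by simp
        then have "G \<subseteq> E h" using Gtight ghm E_def by simp
        moreover have "h \<in> NH"
        proof (rule NH_from[of h hm Lm])
          show "Lm \<subseteq> closure C \<inter> hyp h \<inter> hyp hm"
            using Lm_C Lm_hyp eqG ghm unfolding Lm_def by (auto simp: lift_def hyp_def)
        qed (use gh hnm Lp_ne Lm_aff in auto)
        ultimately show ?thesis using hnp by blast
      qed
    qed
  qed
  have Eface: "G = P \<inter> E h" if GG: "G facet_of P" "h \<in> H - {hp}" "G \<subseteq> E h" for G h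
  proof -
    have tgH: "tg h \<in> {hp, hm}" by (simp add: tg_def)
    have "fst (tg h) \<noteq> fst h"
    proof (cases "tg h = hp")
      case True
      then show ?thesis using gp_nonpar[OF gp hpH, of h] GG(2) by auto
    next
      case False
      then have "tg h = hm" "h \<noteq> hm" using tgH by (auto simp: tg_def split: if_splits)
      then show ?thesis using gp_nonpar[OF gp hmH, of h] GG(2) by auto
    qed
    then have cnz: "ca (tg h) h \<noteq> 0" using s_nz by (simp add: ca_def)
    have "(tg h, h) \<in> I" using tgH GG(2) I_def by auto
    then have "\<And>y. y \<in> P \<Longrightarrow> inner (ca (tg h) h) y \<le> cb (tg h) h" using P_eq by fastforce
    then show ?thesis
      using facet_unique_hyperplane[OF cvxP affP cnz _ GG(1)] GG(3) E_def by auto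
  qed
  define lab where "lab G = (SOME h. h \<in> NH - {hp} \<and> G \<subseteq> E h)" for G
  have lab: "lab G \<in> NH - {hp} \<and> G \<subseteq> E (lab G)" if "G facet_of P" for G
    using label[OF that] unfolding lab_def by (rule someI_ex)
  have NHH: "NH \<subseteq> H" using NH_def by auto
  have inj: "inj_on lab {G. G facet_of P}"
  proof (rule inj_onI)
    fix G G' assume "G \<in> {G. G facet_of P}" "G' \<in> {G. G facet_of P}" "lab G = lab G'"
    then show "G = G'" using Eface lab NHH by (metis (no_types, lifting) Diff_iff mem_Collect_eq subsetD)
  qed
  have "lab ` {G. G facet_of P} \<subseteq> NH - {hp}" using lab by blast
  then have cle: "card {G. G facet_of P} \<le> card (NH - {hp})"
    using card_inj_on_le[OF inj] NHfin by blast
  have "card (NH - {hp}) = card NH - 1" using hpNH by simp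
  moreover have "num_facet_hyps H C = card NH" unfolding num_facet_hyps_def NH_def ..
  ultimately have card: "card {G. G facet_of P} \<le> num_facet_hyps H C - 1" using cle by simp
  have finF: "finite {G. G facet_of P}"
    using finite_polyhedron_faces[OF polyP] by (rule finite_subset[rotated]) (auto simp: facet_of_def)
  show ?thesis using part1 vs polyP cvxP finF card by simp
qed

end
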